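(* Let $H=\sum_{i=1}^N c_iP_i$ be a Pauli Hamiltonian, $|\psi\rangle$ a state, $\mathcal{G}=(G^{[1]},\dots,G^{[m]})$ a grouping of $H$ and $\mathcal{R}=(G'^{[1]},\dots,G'^{[m]})$ a repacking of $\mathcal{G}$. Assume that $\sigma_{P_iP_k}=0$ for all distinct commuting $P_i,P_k\in\mathrm{supp}(H)$. Fix positive integer shot counts $M_1,\dots,M_m$ such that both $G^{[j]}$ and $G'^{[j]}$ are measured $M_j$ times. Let $\overline{E}_{\mathcal{G}}$ and $\overline{E}_{\mathcal{R}}$ be the shot-weighted averaging energy estimators for $\mathcal{G}$ and $\mathcal{R}$. If there exist $j$ and $P_s\in G'^{[j]}\setminus G^{[j]}$ with $\sigma^2_{P_s}>0$, then $\mathrm{Var}(\overline{E}_{\mathcal{R}})<\mathrm{Var}(\overline{E}_{\mathcal{G}})$.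
   Context: A Pauli Hamiltonian is $H=\sum_{i=1}^N c_iP_i$ with real nonzero $c_i$ and distinct $n$-qubit Pauli strings $P_i$; $\mathrm{supp}(H)=\{P_1,\dots,P_N\}$. For a state $|\psi\rangle$, $\langle P\rangle=\langle\psi|P|\psi\rangle$, $\sigma_P^2=1-\langle P\rangle^2$, and for commuting $P,Q$, $\sigma_{PQ}=\langle PQ\rangle-\langle P\rangle\langle Q\rangle$. A grouping is a list $(G^{[1]},\dots,G^{[m]})$ of pairwise disjoint sets of mutually commuting operators from $\mathrm{supp}(H)$ whose union is $\mathrm{supp}(H)$; an overlapped grouping drops disjointness. A repacking of a grouping $(G^{[1]},\dots,G^{[m]})$ is an overlapped grouping $(G'^{[1]},\dots,G'^{[m]})$ with $G^{[j]}\subseteq G'^{[j]}$ for all $j$. Measurement model: group $j$ is measured in $M_j$ independent shots, each shot giving simultaneous $\pm1$ outcomes of all operators in the group (single-shot outcome of $P$ has mean $\langle P\rangle$, variance $\sigma_P^2$; two operators in the same group have single-shot covariance $\sigma_{PQ}$); different groups use independent shots. With $\Gamma(i)=\{j:P_i\in \text{group } j\}$ and $\overline{\langle P_i\rangle}_{(j)}$ the sample mean of $P_i$ over group $j$'s shots, the shot-weighted averaging estimator is $\overline{E}=\sum_ic_i\sum_{j\in\Gamma(i)}\frac{M_j}{\sum_{k\in\Gamma(i)}M_k}\overline{\langle P_i\rangle}_{(j)}$. *)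

theory Defs
  imports "HOL-Probability.Probability"
begin

datatype pauli = PI | PX | PY | PZ

type_synonym pstring = "pauli list"

text \<open>Operators on C^(2^n) are represented by their matrix entries (indices below 2^n).\<close>
type_synonym cmat = "nat \<Rightarrow> nat \<Rightarrow> complex"

fun pmat :: "pauli \<Rightarrow> cmat" where
  "pmat PI r c = (if r = c then 1 else 0)"
| "pmat PX r c = (if r \<noteq> c then 1 else 0)"
| "pmat PY r c = (if r = c then 0 else if r = 0 then - \<i> else \<i>)"
| "pmat PZ r c = (if r = c then (if r = 0 then 1 else -1) else 0)"

definition qbit :: "nat \<Rightarrow> nat \<Rightarrow> nat" where
  "qbit r q = (r div 2 ^ q) mod 2"

text \<open>Matrix of the tensor product of the letters of a Pauli string (qubit q = bit q).\<close>
definition smat :: "pstring \<Rightarrow> cmat" where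
  "smat s r c = (\<Prod>q<length s. pmat (s ! q) (qbit r q) (qbit c q))"

definition mmul :: "nat \<Rightarrow> cmat \<Rightarrow> cmat \<Rightarrow> cmat" where
  "mmul d A B r c = (\<Sum>k<d. A r k * B k c)"

definition commute :: "nat \<Rightarrow> pstring \<Rightarrow> pstring \<Rightarrow> bool" where
  "commute n p q \<longleftrightarrow>
     (\<forall>r<2^n. \<forall>c<2^n. mmul (2^n) (smat p) (smat q) r c = mmul (2^n) (smat q) (smat p) r c)"

definition is_state :: "nat \<Rightarrow> (nat \<Rightarrow> complex) \<Rightarrow> bool" where
  "is_state n \<psi> \<longleftrightarrow> (\<Sum>r<2^n. (cmod (\<psi> r))\<^sup>2) = 1"

text \<open>Expectation value <psi|A|psi> (real for the Hermitian operators used here).\<close>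
definition expv :: "nat \<Rightarrow> (nat \<Rightarrow> complex) \<Rightarrow> cmat \<Rightarrow> real" where
  "expv n \<psi> A = Re (\<Sum>r<2^n. \<Sum>c<2^n. cnj (\<psi> r) * A r c * \<psi> c)"

definition ev :: "nat \<Rightarrow> (nat \<Rightarrow> complex) \<Rightarrow> pstring \<Rightarrow> real" where
  "ev n \<psi> p = expv n \<psi> (smat p)"

definition sigma2 :: "nat \<Rightarrow> (nat \<Rightarrow> complex) \<Rightarrow> pstring \<Rightarrow> real" where
  "sigma2 n \<psi> p = 1 - (ev n \<psi> p)\<^sup>2"

definition ev2 :: "nat \<Rightarrow> (nat \<Rightarrow> complex) \<Rightarrow> pstring \<Rightarrow> pstring \<Rightarrow> real" where
  "ev2 n \<psi> p q = expv n \<psi> (mmul (2^n) (smat p) (smat q))"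

definition sigma_pair :: "nat \<Rightarrow> (nat \<Rightarrow> complex) \<Rightarrow> pstring \<Rightarrow> pstring \<Rightarrow> real" where
  "sigma_pair n \<psi> p q = ev2 n \<psi> p q - ev n \<psi> p * ev n \<psi> q"

definition pauli_hamiltonian :: "nat \<Rightarrow> nat \<Rightarrow> (nat \<Rightarrow> real) \<Rightarrow> (nat \<Rightarrow> pstring) \<Rightarrow> bool" where
  "pauli_hamiltonian n N c P \<longleftrightarrow>
     (\<forall>i<N. c i \<noteq> 0) \<and> (\<forall>i<N. length (P i) = n) \<and> inj_on P {..<N}"

definition supp :: "nat \<Rightarrow> (nat \<Rightarrow> pstring) \<Rightarrow> pstring set" where
  "supp N P = P ` {..<N}"

definition overlapped_grouping :: "nat \<Rightarrow> pstring set \<Rightarrow> nat \<Rightarrow> (nat \<Rightarrow> pstring set) \<Rightarrow> bool" where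
  "overlapped_grouping n S m G \<longleftrightarrow>
     (\<forall>j<m. G j \<subseteq> S) \<and>
     (\<forall>j<m. \<forall>p\<in>G j. \<forall>q\<in>G j. commute n p q) \<and>
     (\<Union>j<m. G j) = S"

definition grouping :: "nat \<Rightarrow> pstring set \<Rightarrow> nat \<Rightarrow> (nat \<Rightarrow> pstring set) \<Rightarrow> bool" where
  "grouping n S m G \<longleftrightarrow> overlapped_grouping n S m G \<and>
     (\<forall>j<m. \<forall>k<m. j \<noteq> k \<longrightarrow> G j \<inter> G k = {})"

definition repacking :: "nat \<Rightarrow> pstring set \<Rightarrow> nat \<Rightarrow> (nat \<Rightarrow> pstring set) \<Rightarrow> (nat \<Rightarrow> pstring set) \<Rightarrow> bool" where
  "repacking n S m G G' \<longleftrightarrow> overlapped_grouping n S m G' \<and> (\<forall>j<m. G j \<subseteq> G' j)"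

text \<open>X j t p omega is the +-1 outcome of operator p in shot t (t < Ms j) of group j.\<close>
definition measurement_model ::
  "nat \<Rightarrow> (nat \<Rightarrow> complex) \<Rightarrow> nat \<Rightarrow> (nat \<Rightarrow> pstring set) \<Rightarrow> (nat \<Rightarrow> nat)
   \<Rightarrow> 'w measure \<Rightarrow> (nat \<Rightarrow> nat \<Rightarrow> pstring \<Rightarrow> 'w \<Rightarrow> real) \<Rightarrow> bool" where
  "measurement_model n \<psi> m G Ms M X \<longleftrightarrow>
     prob_space M \<and>
     (\<forall>j<m. \<forall>t<Ms j. \<forall>p\<in>G j. X j t p \<in> borel_measurable M) \<and>
     (\<forall>j<m. \<forall>t<Ms j. \<forall>p\<in>G j. \<forall>\<omega>\<in>space M. X j t p \<omega> \<in> {-1, 1}) \<and>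
     (\<forall>j<m. \<forall>t<Ms j. \<forall>p\<in>G j. integral\<^sup>L M (X j t p) = ev n \<psi> p) \<and>
     (\<forall>j<m. \<forall>t<Ms j. \<forall>p\<in>G j. \<forall>q\<in>G j. p \<noteq> q \<longrightarrow>
        integral\<^sup>L M (\<lambda>\<omega>. X j t p \<omega> * X j t q \<omega>) = ev2 n \<psi> p q) \<and>
     prob_space.indep_vars M (\<lambda>(j, t). Pi\<^sub>M (G j) (\<lambda>_. borel))
        (\<lambda>(j, t) \<omega>. restrict (\<lambda>p. X j t p \<omega>) (G j)) {(j, t). j < m \<and> t < Ms j}"

definition Gamma :: "nat \<Rightarrow> (nat \<Rightarrow> pstring set) \<Rightarrow> pstring \<Rightarrow> nat set" where
  "Gamma m G p = {j. j < m \<and> p \<in> G j}"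

definition sample_mean :: "(nat \<Rightarrow> nat) \<Rightarrow> (nat \<Rightarrow> nat \<Rightarrow> pstring \<Rightarrow> 'w \<Rightarrow> real) \<Rightarrow> nat \<Rightarrow> pstring \<Rightarrow> 'w \<Rightarrow> real" where
  "sample_mean Ms X j p \<omega> = (\<Sum>t<Ms j. X j t p \<omega>) / real (Ms j)"

definition estimator ::
  "nat \<Rightarrow> (nat \<Rightarrow> real) \<Rightarrow> (nat \<Rightarrow> pstring) \<Rightarrow> nat \<Rightarrow> (nat \<Rightarrow> pstring set) \<Rightarrow> (nat \<Rightarrow> nat)
   \<Rightarrow> (nat \<Rightarrow> nat \<Rightarrow> pstring \<Rightarrow> 'w \<Rightarrow> real) \<Rightarrow> 'w \<Rightarrow> real" where
  "estimator N c P m G Ms X \<omega> =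
     (\<Sum>i<N. c i * (\<Sum>j\<in>Gamma m G (P i).
        real (Ms j) / real (\<Sum>k\<in>Gamma m G (P i). Ms k) * sample_mean Ms X j (P i) \<omega>))"

definition variance :: "'w measure \<Rightarrow> ('w \<Rightarrow> real) \<Rightarrow> real" where
  "variance M f = integral\<^sup>L M (\<lambda>\<omega>. (f \<omega> - integral\<^sup>L M f)\<^sup>2)"

end

theory Submission
  imports Defs
begin

lemma bnd_int:
  assumes "prob_space M" "f \<in> borel_measurable M" "\<forall>\<omega>\<in>space M. f \<omega> \<in> {-1,1::real}"
  shows "integrable M f"
proof -
  interpret prob_space M by fact
  show ?thesis
    by (rule integrable_const_bound[where B=1]) (use assms in \<open>auto intro!: AE_I2\<close>)
qed

lemma mm_int:
  assumes mm: "measurement_model n \<psi> m G Ms M X" and "j<m" "t<Ms j" "p\<in>G j"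
  shows "integrable M (X j t p)"
  using mm assms by (intro bnd_int) (auto simp: measurement_model_def)

lemma indep_pair:
  assumes mm: "measurement_model n \<psi> m G Ms M X"
    and j: "j<m" "t<Ms j" "j'<m" "t'<Ms j'" "(j,t)\<noteq>(j',t')" "p\<in>G j" "q\<in>G j'"
  shows "integral\<^sup>L M (\<lambda>\<omega>. X j t p \<omega> * X j' t' q \<omega>) = integral\<^sup>L M (X j t p) * integral\<^sup>L M (X j' t' q)"
proof -
  interpret prob_space M using mm by (simp add: measurement_model_def)
  define K where "K = {(j,t),(j',t')}"
  have ind: "indep_vars (\<lambda>(j, t). Pi\<^sub>M (G j) (\<lambda>_. borel))
        (\<lambda>(j, t) \<omega>. restrict (\<lambda>p. X j t p \<omega>) (G j)) K"
    by (rule indep_vars_subset[OF _ ]) (use mm j in \<open>auto simp: measurement_model_def K_def\<close>)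
  define sel where "sel k = (if k = (j,t) then p else q)" for k
  have ind2: "indep_vars (\<lambda>_. borel) (\<lambda>k \<omega>. (\<lambda>f. f (sel k)) ((\<lambda>(j, t) \<omega>. restrict (\<lambda>p. X j t p \<omega>) (G j)) k \<omega>)) K"
    apply (rule indep_vars_compose2[OF ind])
    using j by (auto simp: K_def sel_def)
  have ind3: "indep_vars (\<lambda>_. borel) (\<lambda>k \<omega>. X (fst k) (snd k) (sel k) \<omega>) K"
    apply (subst indep_vars_cong[OF refl, where Y="\<lambda>k \<omega>. (\<lambda>f. f (sel k)) ((\<lambda>(j, t) \<omega>. restrict (\<lambda>p. X j t p \<omega>) (G j)) k \<omega>)" and N'="\<lambda>_. borel"])
    using j ind2 by (auto simp: K_def sel_def)
  have int: "integrable M (\<lambda>\<omega>. X (fst k) (snd k) (sel k) \<omega>)" if "k \<in> K" for k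
  proof -
    have "k = (j,t) \<or> k = (j',t')" using that by (auto simp: K_def)
    then show ?thesis
    proof
      assume "k = (j,t)" then show ?thesis using mm_int[OF mm j(1,2,6)] by (simp add: sel_def)
    next
      assume "k = (j',t')" then show ?thesis using mm_int[OF mm j(3,4,7)] j(5) by (auto simp: sel_def)
    qed
  qed
  have "(\<integral>\<omega>. (\<Prod>k\<in>K. X (fst k) (snd k) (sel k) \<omega>) \<partial>M) = (\<Prod>k\<in>K. \<integral>\<omega>. X (fst k) (snd k) (sel k) \<omega> \<partial>M)"
    by (rule indep_vars_lebesgue_integral) (use ind3 int in \<open>auto simp: K_def\<close>)
  moreover have "sel (j',t') = q" using j(5) by (auto simp: sel_def)
  moreover have "sel (j,t) = p" by (simp add: sel_def)
  ultimately show ?thesis using j(5) by (simp add: K_def)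
qed

lemma var_uncorr:
  fixes Y :: "'k \<Rightarrow> 'w \<Rightarrow> real"
  assumes ps: "prob_space M" and fin: "finite I"
   and meas: "\<forall>k\<in>I. Y k \<in> borel_measurable M"
   and pm: "\<forall>k\<in>I. \<forall>\<omega>\<in>space M. Y k \<omega> \<in> {-1,1}"
   and unc: "\<forall>k\<in>I. \<forall>l\<in>I. k\<noteq>l \<longrightarrow> integral\<^sup>L M (\<lambda>\<omega>. Y k \<omega> * Y l \<omega>) = integral\<^sup>L M (Y k) * integral\<^sup>L M (Y l)"
  shows "variance M (\<lambda>\<omega>. \<Sum>k\<in>I. a k * Y k \<omega>) = (\<Sum>k\<in>I. (a k)\<^sup>2 * (1 - (integral\<^sup>L M (Y k))\<^sup>2))"
proof -
  interpret prob_space M by fact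
  define \<mu> where "\<mu> k = integral\<^sup>L M (Y k)" for k
  have intY: "integrable M (Y k)" if "k \<in> I" for k
    using that meas pm by (intro bnd_int[OF ps]) auto
  have intYY: "integrable M (\<lambda>\<omega>. Y k \<omega> * Y l \<omega>)" if "k \<in> I" "l \<in> I" for k l
  proof (intro bnd_int[OF ps])
    show "(\<lambda>\<omega>. Y k \<omega> * Y l \<omega>) \<in> borel_measurable M" using that meas by (intro borel_measurable_times) auto
    show "\<forall>\<omega>\<in>space M. Y k \<omega> * Y l \<omega> \<in> {- 1, 1}"
    proof
      fix \<omega> assume "\<omega> \<in> space M"
      then have "Y k \<omega> \<in> {-1,1}" "Y l \<omega> \<in> {-1,1}" using pm that by auto
      then show "Y k \<omega> * Y l \<omega> \<in> {- 1, 1}" by auto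
    qed
  qed
  have E: "integral\<^sup>L M (\<lambda>\<omega>. \<Sum>k\<in>I. a k * Y k \<omega>) = (\<Sum>k\<in>I. a k * \<mu> k)"
    using intY by (simp add: \<mu>_def)
  have sq: "((\<Sum>k\<in>I. a k * Y k \<omega>) - (\<Sum>k\<in>I. a k * \<mu> k))\<^sup>2
     = (\<Sum>k\<in>I. \<Sum>l\<in>I. a k * a l * ((Y k \<omega> - \<mu> k) * (Y l \<omega> - \<mu> l)))" for \<omega>
  proof -
    have "(\<Sum>k\<in>I. a k * Y k \<omega>) - (\<Sum>k\<in>I. a k * \<mu> k) = (\<Sum>k\<in>I. a k * (Y k \<omega> - \<mu> k))"
      by (simp add: sum_subtractf right_diff_distrib)
    then show ?thesis
      by (simp add: power2_eq_square sum_product algebra_simps)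
  qed
  have cov: "integral\<^sup>L M (\<lambda>\<omega>. (Y k \<omega> - \<mu> k) * (Y l \<omega> - \<mu> l)) = (if k = l then 1 - (\<mu> k)\<^sup>2 else 0)"
    if "k \<in> I" "l \<in> I" for k l
  proof -
    have "integral\<^sup>L M (\<lambda>\<omega>. (Y k \<omega> - \<mu> k) * (Y l \<omega> - \<mu> l))
       = integral\<^sup>L M (\<lambda>\<omega>. Y k \<omega> * Y l \<omega>) - \<mu> k * \<mu> l"
    proof -
      have "(\<lambda>\<omega>. (Y k \<omega> - \<mu> k) * (Y l \<omega> - \<mu> l)) = (\<lambda>\<omega>. (Y k \<omega> * Y l \<omega> - \<mu> l * Y k \<omega>) - (\<mu> k * Y l \<omega> - \<mu> k * \<mu> l))"
        by (auto simp: algebra_simps)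
      then show ?thesis
        using intY[OF that(1)] intY[OF that(2)] intYY[OF that]
        by (simp add: \<mu>_def prob_space)
    qed
    moreover have "integral\<^sup>L M (\<lambda>\<omega>. Y k \<omega> * Y l \<omega>) = 1" if "k = l"
    proof -
      have "integral\<^sup>L M (\<lambda>\<omega>. Y k \<omega> * Y l \<omega>) = integral\<^sup>L M (\<lambda>\<omega>. 1)"
      proof (intro Bochner_Integration.integral_cong refl)
        fix \<omega> assume "\<omega> \<in> space M"
        then have "Y k \<omega> \<in> {-1,1}" using pm \<open>k \<in> I\<close> by auto
        then show "Y k \<omega> * Y l \<omega> = 1" using that by auto
      qed
      then show ?thesis by (simp add: prob_space)
    qed
    ultimately show ?thesis using unc that by (auto simp: \<mu>_def power2_eq_square)
  qed
  have "Defs.variance M (\<lambda>\<omega>. \<Sum>k\<in>I. a k * Y k \<omega>)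
     = integral\<^sup>L M (\<lambda>\<omega>. \<Sum>k\<in>I. \<Sum>l\<in>I. a k * a l * ((Y k \<omega> - \<mu> k) * (Y l \<omega> - \<mu> l)))"
    unfolding Defs.variance_def E sq ..
  also have "\<dots> = (\<Sum>k\<in>I. \<Sum>l\<in>I. a k * a l * integral\<^sup>L M (\<lambda>\<omega>. (Y k \<omega> - \<mu> k) * (Y l \<omega> - \<mu> l)))"
  proof -
    have "integrable M (\<lambda>\<omega>. (Y k \<omega> - \<mu> k) * (Y l \<omega> - \<mu> l))" if "k \<in> I" "l \<in> I" for k l
    proof -
      have "(\<lambda>\<omega>. (Y k \<omega> - \<mu> k) * (Y l \<omega> - \<mu> l)) = (\<lambda>\<omega>. (Y k \<omega> * Y l \<omega> - \<mu> l * Y k \<omega>) - (\<mu> k * Y l \<omega> - \<mu> k * \<mu> l))"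
        by (auto simp: algebra_simps)
      then show ?thesis using intY[OF that(1)] intY[OF that(2)] intYY[OF that] by simp
    qed
    then show ?thesis by (simp add: integral_sum)
  qed
  also have "\<dots> = (\<Sum>k\<in>I. \<Sum>l\<in>I. if l = k then a k * a k * (1 - (\<mu> k)\<^sup>2) else 0)"
    by (intro sum.cong refl) (auto simp: cov)
  also have "\<dots> = (\<Sum>k\<in>I. (a k)\<^sup>2 * (1 - (\<mu> k)\<^sup>2))"
    using fin by (simp add: power2_eq_square)
  finally show ?thesis by (simp add: \<mu>_def)
qed

lemma finite_Gamma: "finite (Gamma m G p)"
  unfolding Gamma_def by auto

lemma var_formula:
  assumes H: "pauli_hamiltonian n N c P"
   and og: "overlapped_grouping n (supp N P) m G"
   and uncorr: "\<forall>p\<in>supp N P. \<forall>q\<in>supp N P. p \<noteq> q \<longrightarrow> commute n p q \<longrightarrow> sigma_pair n \<psi> p q = 0"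
   and shots: "\<forall>j<m. Ms j > 0"
   and mm: "measurement_model n \<psi> m G Ms M X"
  shows "variance M (estimator N c P m G Ms X)
     = (\<Sum>i<N. (c i)\<^sup>2 * sigma2 n \<psi> (P i) / real (\<Sum>k\<in>Gamma m G (P i). Ms k))"
proof -
  define S where "S i = real (\<Sum>k\<in>Gamma m G (P i). Ms k)" for i
  define I where "I = (SIGMA i:{..<N}. SIGMA j:Gamma m G (P i). {..<Ms j})"
  define Y where "Y = (\<lambda>(i,j,t) \<omega>. X j t (P i) \<omega>)"
  define a where "a = (\<lambda>(i::nat,j::nat,t::nat). c i / S i)"
  have finI: "finite I" unfolding I_def by (auto intro!: finite_SigmaI simp: finite_Gamma)
  have memI: "(i,j,t) \<in> I \<longleftrightarrow> i < N \<and> j < m \<and> P i \<in> G j \<and> t < Ms j" for i j t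
    by (auto simp: I_def Gamma_def)
  have ps: "prob_space M" using mm by (simp add: measurement_model_def)
  have tripsum: "(\<Sum>i<N. \<Sum>j\<in>Gamma m G (P i). \<Sum>t<Ms j. f i j t) = (\<Sum>(i,j,t)\<in>I. f i j t)" for f :: "nat \<Rightarrow> nat \<Rightarrow> nat \<Rightarrow> real"
  proof -
    have "(\<Sum>i<N. \<Sum>j\<in>Gamma m G (P i). \<Sum>t<Ms j. f i j t) = (\<Sum>i<N. \<Sum>(j,t)\<in>(SIGMA j:Gamma m G (P i). {..<Ms j}). f i j t)"
      by (intro sum.cong refl sum.Sigma) (auto simp: finite_Gamma)
    also have "\<dots> = (\<Sum>(i,j,t)\<in>I. f i j t)"
      unfolding I_def by (subst sum.Sigma) (auto intro!: finite_SigmaI simp: finite_Gamma split_def)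
    finally show ?thesis .
  qed
  have est: "estimator N c P m G Ms X = (\<lambda>\<omega>. \<Sum>k\<in>I. a k * Y k \<omega>)"
  proof
    fix \<omega>
    have "estimator N c P m G Ms X \<omega> = (\<Sum>i<N. \<Sum>j\<in>Gamma m G (P i). \<Sum>t<Ms j. c i / S i * X j t (P i) \<omega>)"
      unfolding estimator_def
    proof (intro sum.cong refl)
      fix i assume "i \<in> {..<N}"
      have "c i * (real (Ms j) / S i * sample_mean Ms X j (P i) \<omega>) = (\<Sum>t<Ms j. c i / S i * X j t (P i) \<omega>)"
        if "j \<in> Gamma m G (P i)" for j
      proof -
        have "Ms j > 0" using that shots by (auto simp: Gamma_def)
        then have "real (Ms j) \<noteq> 0" by simp
        have "c i * (real (Ms j) / S i * sample_mean Ms X j (P i) \<omega>) = c i / S i * (\<Sum>t<Ms j. X j t (P i) \<omega>)"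
          unfolding sample_mean_def using \<open>real (Ms j) \<noteq> 0\<close> by (simp add: field_simps)
        then show ?thesis by (simp add: sum_distrib_left)
      qed
      then show "c i * (\<Sum>j\<in>Gamma m G (P i). real (Ms j) / real (sum Ms (Gamma m G (P i))) * sample_mean Ms X j (P i) \<omega>) =
         (\<Sum>j\<in>Gamma m G (P i). \<Sum>t<Ms j. c i / S i * X j t (P i) \<omega>)"
        by (simp add: sum_distrib_left S_def)
    qed
    also have "\<dots> = (\<Sum>k\<in>I. a k * Y k \<omega>)"
      by (subst tripsum) (simp add: a_def Y_def split_def)
    finally show "estimator N c P m G Ms X \<omega> = (\<Sum>k\<in>I. a k * Y k \<omega>)" .
  qed
  have meas: "\<forall>k\<in>I. Y k \<in> borel_measurable M"
    using mm by (auto simp: Y_def memI measurement_model_def)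
  have pm: "\<forall>k\<in>I. \<forall>\<omega>\<in>space M. Y k \<omega> \<in> {-1,1}"
  proof (intro ballI)
    fix k \<omega> assume "k \<in> I" "\<omega> \<in> space M"
    moreover obtain i j t where "k = (i,j,t)" by (cases k) auto
    ultimately show "Y k \<omega> \<in> {-1,1}" using mm unfolding measurement_model_def Y_def
      by (simp add: memI)
  qed
  have EY: "integral\<^sup>L M (Y (i,j,t)) = ev n \<psi> (P i)" if "(i,j,t) \<in> I" for i j t
    using mm that by (auto simp: Y_def memI measurement_model_def)
  have unc: "\<forall>k\<in>I. \<forall>l\<in>I. k\<noteq>l \<longrightarrow> integral\<^sup>L M (\<lambda>\<omega>. Y k \<omega> * Y l \<omega>) = integral\<^sup>L M (Y k) * integral\<^sup>L M (Y l)"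
  proof (intro ballI impI)
    fix k l assume k: "k \<in> I" and l: "l \<in> I" and kl: "k \<noteq> l"
    obtain i j t where kk: "k = (i,j,t)" by (cases k) auto
    obtain i' j' t' where ll: "l = (i',j',t')" by (cases l) auto
    have ki: "i < N" "j < m" "P i \<in> G j" "t < Ms j" using k kk memI by auto
    have li: "i' < N" "j' < m" "P i' \<in> G j'" "t' < Ms j'" using l ll memI by auto
    show "integral\<^sup>L M (\<lambda>\<omega>. Y k \<omega> * Y l \<omega>) = integral\<^sup>L M (Y k) * integral\<^sup>L M (Y l)"
    proof (cases "(j,t) = (j',t')")
      case False
      then show ?thesis using indep_pair[OF mm ki(2,4) li(2,4) False ki(3) li(3)]
        by (simp add: kk ll Y_def)
    next
      case True
      then have jj: "j' = j" "t' = t" by auto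
      with kl kk ll have ii: "i \<noteq> i'" by auto
      have Pne: "P i \<noteq> P i'" using H ii ki(1) li(1) by (auto simp: pauli_hamiltonian_def inj_on_def)
      have sp: "P i \<in> supp N P" "P i' \<in> supp N P" using ki(1) li(1) by (auto simp: supp_def)
      have com: "commute n (P i) (P i')" using og ki li jj by (auto simp: overlapped_grouping_def)
      have "sigma_pair n \<psi> (P i) (P i') = 0" using uncorr sp Pne com by blast
      then have e2: "ev2 n \<psi> (P i) (P i') = ev n \<psi> (P i) * ev n \<psi> (P i')" by (simp add: sigma_pair_def)
      have "integral\<^sup>L M (\<lambda>\<omega>. X j t (P i) \<omega> * X j t (P i') \<omega>) = ev2 n \<psi> (P i) (P i')"
        using mm ki li jj Pne by (auto simp: measurement_model_def)
      then show ?thesis using EY k l kk ll jj e2 by (simp add: Y_def)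
    qed
  qed
  have "variance M (estimator N c P m G Ms X) = (\<Sum>k\<in>I. (a k)\<^sup>2 * (1 - (integral\<^sup>L M (Y k))\<^sup>2))"
    unfolding est by (rule var_uncorr[OF ps finI meas pm unc])
  also have "\<dots> = (\<Sum>(i,j,t)\<in>I. (c i / S i)\<^sup>2 * sigma2 n \<psi> (P i))"
    by (intro sum.cong refl) (auto simp: a_def EY sigma2_def)
  also have "\<dots> = (\<Sum>i<N. \<Sum>j\<in>Gamma m G (P i). \<Sum>t<Ms j. (c i / S i)\<^sup>2 * sigma2 n \<psi> (P i))"
    by (subst tripsum) (simp add: split_def)
  also have "\<dots> = (\<Sum>i<N. (c i / S i)\<^sup>2 * sigma2 n \<psi> (P i) * S i)"
  proof (intro sum.cong refl)
    fix i
    have "(\<Sum>j\<in>Gamma m G (P i). \<Sum>t<Ms j. (c i / S i)\<^sup>2 * sigma2 n \<psi> (P i))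
        = (\<Sum>j\<in>Gamma m G (P i). real (Ms j) * ((c i / S i)\<^sup>2 * sigma2 n \<psi> (P i)))" by simp
    also have "\<dots> = (\<Sum>j\<in>Gamma m G (P i). real (Ms j)) * ((c i / S i)\<^sup>2 * sigma2 n \<psi> (P i))"
      by (rule sum_distrib_right[symmetric])
    finally show "(\<Sum>j\<in>Gamma m G (P i). \<Sum>t<Ms j. (c i / S i)\<^sup>2 * sigma2 n \<psi> (P i)) = (c i / S i)\<^sup>2 * sigma2 n \<psi> (P i) * S i"
      by (simp add: S_def)
  qed
  also have "\<dots> = (\<Sum>i<N. (c i)\<^sup>2 * sigma2 n \<psi> (P i) / S i)"
    by (intro sum.cong refl) (auto simp: power2_eq_square)
  finally show ?thesis by (simp add: S_def)
qed

lemma sig_nonneg: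
  assumes mm: "measurement_model n \<psi> m G Ms M X" and j: "j<m" "t<Ms j" "p\<in>G j"
  shows "0 \<le> sigma2 n \<psi> p"
proof -
  have ps: "prob_space M" using mm by (simp add: measurement_model_def)
  have "variance M (\<lambda>\<omega>. \<Sum>k\<in>{()}. 1 * (\<lambda>_. X j t p) k \<omega>) = (\<Sum>k\<in>{()}. 1\<^sup>2 * (1 - (integral\<^sup>L M ((\<lambda>_. X j t p) k))\<^sup>2))"
    by (rule var_uncorr[OF ps]) (use mm j in \<open>auto simp: measurement_model_def\<close>)
  moreover have "0 \<le> variance M (\<lambda>\<omega>. \<Sum>k\<in>{()}. 1 * (\<lambda>_. X j t p) k \<omega>)"
    unfolding variance_def by (rule Bochner_Integration.integral_nonneg) simp
  ultimately show ?thesis using mm j by (simp add: sigma2_def measurement_model_def)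
qed

theorem theorem2:
  fixes n N m :: nat and c :: "nat \<Rightarrow> real" and P :: "nat \<Rightarrow> pstring"
    and \<psi> :: "nat \<Rightarrow> complex" and G G' :: "nat \<Rightarrow> pstring set" and Ms :: "nat \<Rightarrow> nat"
    and MG :: "'w measure" and XG :: "nat \<Rightarrow> nat \<Rightarrow> pstring \<Rightarrow> 'w \<Rightarrow> real"
    and MR :: "'v measure" and XR :: "nat \<Rightarrow> nat \<Rightarrow> pstring \<Rightarrow> 'v \<Rightarrow> real"
  assumes H: "pauli_hamiltonian n N c P"
    and state: "is_state n \<psi>"
    and grp: "grouping n (supp N P) m G"
    and rep: "repacking n (supp N P) m G G'"
    and uncorr: "\<forall>p\<in>supp N P. \<forall>q\<in>supp N P. p \<noteq> q \<longrightarrow> commute n p q \<longrightarrow> sigma_pair n \<psi> p q = 0"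
    and shots: "\<forall>j<m. Ms j > 0"
    and modelG: "measurement_model n \<psi> m G Ms MG XG"
    and modelR: "measurement_model n \<psi> m G' Ms MR XR"
    and ex: "\<exists>j<m. \<exists>p\<in>G' j - G j. sigma2 n \<psi> p > 0"
  shows "variance MR (estimator N c P m G' Ms XR) < variance MG (estimator N c P m G Ms XG)"
proof -
  have ogG: "overlapped_grouping n (supp N P) m G" using grp by (simp add: grouping_def)
  have ogR: "overlapped_grouping n (supp N P) m G'" using rep by (simp add: repacking_def)
  have sub: "\<forall>j<m. G j \<subseteq> G' j" using rep by (simp add: repacking_def)
  define SG where "SG i = real (\<Sum>k\<in>Gamma m G (P i). Ms k)" for i
  define SR where "SR i = real (\<Sum>k\<in>Gamma m G' (P i). Ms k)" for i
  define f where "f i = (c i)\<^sup>2 * sigma2 n \<psi> (P i)" for i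
  have VG: "variance MG (estimator N c P m G Ms XG) = (\<Sum>i<N. f i / SG i)"
    using var_formula[OF H ogG uncorr shots modelG] by (simp add: f_def SG_def)
  have VR: "variance MR (estimator N c P m G' Ms XR) = (\<Sum>i<N. f i / SR i)"
    using var_formula[OF H ogR uncorr shots modelR] by (simp add: f_def SR_def)
  have GamSub: "Gamma m G (P i) \<subseteq> Gamma m G' (P i)" for i
    using sub by (auto simp: Gamma_def)
  have cover: "\<exists>j<m. P i \<in> G j" if "i < N" for i
  proof -
    have "P i \<in> supp N P" using that by (simp add: supp_def)
    then show ?thesis using ogG by (auto simp: overlapped_grouping_def)
  qed
  have SGpos: "SG i > 0" if "i < N" for i
  proof -
    obtain j where j: "j < m" "P i \<in> G j" using cover[OF \<open>i < N\<close>] by blast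
    have "Ms j \<le> (\<Sum>k\<in>Gamma m G (P i). Ms k)"
      by (rule member_le_sum) (use j in \<open>auto simp: Gamma_def finite_Gamma\<close>)
    then have "0 < (\<Sum>k\<in>Gamma m G (P i). Ms k)" using shots j by (meson order_less_le_trans)
    then show ?thesis unfolding SG_def by linarith
  qed
  have SGle: "SG i \<le> SR i" for i
    unfolding SG_def SR_def by (simp add: sum_mono2 finite_Gamma GamSub)
  have fnn: "0 \<le> f i" if "i < N" for i
  proof -
    obtain j where j: "j < m" "P i \<in> G j" using cover[OF \<open>i < N\<close>] by blast
    show ?thesis unfolding f_def using sig_nonneg[OF modelG j(1) _ j(2), of 0] shots j by auto
  qed
  have le: "f i / SR i \<le> f i / SG i" if "i < N" for i
    using SGle[of i] SGpos[OF that] fnn[OF that] by (intro divide_left_mono) auto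
  obtain j0 p where j0: "j0 < m" "p \<in> G' j0" "p \<notin> G j0" "sigma2 n \<psi> p > 0" using ex by blast
  have "p \<in> supp N P" using ogR j0 by (auto simp: overlapped_grouping_def)
  then obtain s where s: "s < N" "P s = p" by (auto simp: supp_def)
  have "SG s + real (Ms j0) \<le> SR s"
  proof -
    have "j0 \<notin> Gamma m G (P s)" "j0 \<in> Gamma m G' (P s)" using j0 s by (auto simp: Gamma_def)
    then have "(\<Sum>k\<in>insert j0 (Gamma m G (P s)). Ms k) \<le> (\<Sum>k\<in>Gamma m G' (P s). Ms k)"
      using GamSub[of s] by (intro sum_mono2) (auto simp: finite_Gamma)
    then have "Ms j0 + (\<Sum>k\<in>Gamma m G (P s). Ms k) \<le> (\<Sum>k\<in>Gamma m G' (P s). Ms k)"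
      using \<open>j0 \<notin> Gamma m G (P s)\<close> by (simp add: finite_Gamma)
    then have "real (Ms j0 + (\<Sum>k\<in>Gamma m G (P s). Ms k)) \<le> real (\<Sum>k\<in>Gamma m G' (P s). Ms k)"
      by (simp only: of_nat_le_iff)
    then show ?thesis unfolding SG_def SR_def of_nat_add by linarith
  qed
  then have SGlt: "SG s < SR s" using shots j0 by auto
  have fpos: "0 < f s" using H s j0 by (auto simp: f_def pauli_hamiltonian_def)
  have lt: "f s / SR s < f s / SG s"
    using SGlt SGpos[OF s(1)] fpos by (intro divide_strict_left_mono) auto
  have "(\<Sum>i<N. f i / SR i) < (\<Sum>i<N. f i / SG i)"
    by (rule sum_strict_mono_ex1) (use le lt s in auto)
  then show ?thesis using VG VR by simp
qed
end
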